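(* In the setting below, let $M\in\mathcal M$ be a fixed model with $P_n(M)^{-1}e^{-\delta n}\to0$ as $n\to\infty$ for every $\delta>0$. Let $\tilde\theta^M_n=(\tilde\theta^M_{n,j})_{j=1}^p$ be an estimator (a function of $y_1,\dots,y_n$) that is unconditionally unbiased for $\theta^M_0$, and suppose there is a constant $C\in(0,\infty)$ such that for all $1\le j\le p$ and $n\ge1$ the distribution of $\sqrt n(\tilde\theta^M_{n,j}-\theta^M_{0,j})$ is sub-Gaussian with parameter $C$. Then for every $\varepsilon>0$, $$\lim_{n\to\infty}P\big(\|\tilde\theta^M_n-\theta^M_0\|_\infty>\varepsilon\,\big|\,S_n(\bar T_n)=M\big)=0.$$
   Context: Setting: $(y_i)_{i\ge1}$ are i.i.d. from a distribution $f^*$. $\{p_\theta:\theta\in\Theta\}$, $\Theta\subseteq\mathbb R^p$, is a regular exponential family with natural parameter $\theta$, sufficient statistic $T$, and log-likelihood $\ell_\theta(y)=\log p_\theta(y)$; $\bar T_n=n^{-1}\sum_{i=1}^nT(y_i)$. $\mathcal M$ is a countable set of submodels $M=\{p_\theta:\theta\in\Theta^M\}$, $\Theta^M\subseteq\Theta$. For each $n$, $S_n:\mathbb R^p\to\mathcal M$ is a model selection procedure applied to $\bar T_n$, and $P_n(M)=P_{f^*}(S_n(\bar T_n)=M)$ when $y_1,\dots,y_n$ are i.i.d. $f^*$. $f^*$ need not belong to any model. The target is $\theta^M_0=\arg\sup_{\theta\in\Theta^M}\mathbb E_{f^*}[\ell_\theta(y)]$ (assumed to exist). *)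

theory Defs
  imports "HOL-Probability.Probability"
begin

definition nat_param_space :: "'y measure \<Rightarrow> ('y \<Rightarrow> real^'p) \<Rightarrow> (real^'p) set" where
  "nat_param_space nu T = {\<theta>. (\<integral>\<^sup>+ y. ennreal (exp (\<theta> \<bullet> T y)) \<partial>nu) < \<infinity>}"

definition log_partition :: "'y measure \<Rightarrow> ('y \<Rightarrow> real^'p) \<Rightarrow> real^'p \<Rightarrow> real" where
  "log_partition nu T \<theta> = ln (enn2real (\<integral>\<^sup>+ y. ennreal (exp (\<theta> \<bullet> T y)) \<partial>nu))"

definition loglik :: "'y measure \<Rightarrow> ('y \<Rightarrow> real^'p) \<Rightarrow> real^'p \<Rightarrow> 'y \<Rightarrow> real" where
  "loglik nu T \<theta> y = \<theta> \<bullet> T y - log_partition nu T \<theta>"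

definition regular_expfam :: "'y measure \<Rightarrow> ('y \<Rightarrow> real^'p) \<Rightarrow> (real^'p) set \<Rightarrow> bool" where
  "regular_expfam nu T \<Theta> \<longleftrightarrow> T \<in> borel_measurable nu \<and> \<Theta> = nat_param_space nu T \<and>
     \<Theta> \<noteq> {} \<and> open \<Theta> \<and>
     (\<forall>\<theta>\<in>\<Theta>. 0 < (\<integral>\<^sup>+ y. ennreal (exp (\<theta> \<bullet> T y)) \<partial>nu))"

definition linf_norm :: "real^'p \<Rightarrow> real" where
  "linf_norm x = (MAX j\<in>UNIV. \<bar>x $ j\<bar>)"

definition subgaussian :: "'a measure \<Rightarrow> ('a \<Rightarrow> real) \<Rightarrow> real \<Rightarrow> bool" where
  "subgaussian P X \<sigma> \<longleftrightarrow> (\<forall>s::real. integrable P (\<lambda>\<omega>. exp (s * X \<omega>)) \<and>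
      (\<integral>\<omega>. exp (s * X \<omega>) \<partial>P) \<le> exp (s\<^sup>2 * \<sigma>\<^sup>2 / 2))"

end

theory Submission
  imports Defs
begin

lemma (in prob_space) subg_tail1:
  assumes sg: "subgaussian M X C" and C: "C > 0" and t: "t > 0"
    and Xm: "X \<in> borel_measurable M"
  shows "prob {\<omega>\<in>space M. X \<omega> \<ge> t} \<le> exp (- t\<^sup>2 / (2 * C\<^sup>2))"
proof -
  define s where "s = t / C\<^sup>2"
  have s: "s > 0" using C t by (simp add: s_def)
  have int: "integrable M (\<lambda>\<omega>. exp (s * X \<omega>))" and ib: "(\<integral>\<omega>. exp (s * X \<omega>) \<partial>M) \<le> exp (s\<^sup>2 * C\<^sup>2 / 2)"
    using sg unfolding subgaussian_def by auto
  have eq: "{\<omega>\<in>space M. X \<omega> \<ge> t} = {\<omega>\<in>space M. exp (s * X \<omega>) \<ge> exp (s * t)}"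
    using s by auto
  have "prob {\<omega>\<in>space M. exp (s * X \<omega>) \<ge> exp (s * t)} \<le> (\<integral>\<omega>. exp (s * X \<omega>) \<partial>M) / exp (s * t)"
    by (rule integral_Markov_inequality_measure[OF int, where A="space M"]) auto
  also have "\<dots> \<le> exp (s\<^sup>2 * C\<^sup>2 / 2) / exp (s * t)"
    using ib by (simp add: divide_right_mono)
  also have "\<dots> = exp (s\<^sup>2 * C\<^sup>2 / 2 - s * t)" by (simp add: exp_diff)
  also have "s\<^sup>2 * C\<^sup>2 / 2 - s * t = - t\<^sup>2 / (2 * C\<^sup>2)"
    using C by (simp add: s_def field_simps power2_eq_square)
  finally show ?thesis using eq by simp
qed

lemma (in prob_space) subg_tail2:
  assumes sg: "subgaussian M X C" and C: "C > 0" and t: "t > 0"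
    and Xm: "X \<in> borel_measurable M"
  shows "prob {\<omega>\<in>space M. \<bar>X \<omega>\<bar> \<ge> t} \<le> 2 * exp (- t\<^sup>2 / (2 * C\<^sup>2))"
proof -
  have sg': "subgaussian M (\<lambda>\<omega>. - X \<omega>) C"
    unfolding subgaussian_def
  proof
    fix s'::real
    from sg have "integrable M (\<lambda>\<omega>. exp ((-s') * X \<omega>)) \<and> (\<integral>\<omega>. exp ((-s') * X \<omega>) \<partial>M) \<le> exp ((-s')\<^sup>2 * C\<^sup>2 / 2)"
      unfolding subgaussian_def by blast
    then show "integrable M (\<lambda>\<omega>. exp (s' * - X \<omega>)) \<and> (\<integral>\<omega>. exp (s' * - X \<omega>) \<partial>M) \<le> exp (s'\<^sup>2 * C\<^sup>2 / 2)"
      by simp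
  qed
  have "{\<omega>\<in>space M. \<bar>X \<omega>\<bar> \<ge> t} = {\<omega>\<in>space M. X \<omega> \<ge> t} \<union> {\<omega>\<in>space M. - X \<omega> \<ge> t}"
    by auto
  also have "prob \<dots> \<le> prob {\<omega>\<in>space M. X \<omega> \<ge> t} + prob {\<omega>\<in>space M. - X \<omega> \<ge> t}"
    using Xm by (intro measure_Un_le) auto
  also have "\<dots> \<le> 2 * exp (- t\<^sup>2 / (2 * C\<^sup>2))"
    using subg_tail1[OF sg C t Xm] subg_tail1[OF sg' C t] Xm by auto
  finally show ?thesis .
qed

lemma linf_gt: "linf_norm (x::real^'p) > e \<Longrightarrow> \<exists>j. \<bar>x $ j\<bar> > e"
  unfolding linf_norm_def by (subst (asm) Max_gr_iff) auto

lemma vec_nth_meas: "(f :: _ \<Rightarrow> real^'p) \<in> borel_measurable M \<Longrightarrow> (\<lambda>\<omega>. f \<omega> $ j) \<in> borel_measurable M"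
  by (rule borel_measurable_continuous_on[OF _ ]) (intro continuous_intros)


theorem theorem3:
  fixes P :: "'a measure"                     \<comment> \<open>underlying probability space\<close>
    and Y :: "'y measure"                     \<comment> \<open>sample space\<close>
    and F :: "'y measure"                     \<comment> \<open>true distribution f*\<close>
    and y :: "nat \<Rightarrow> 'a \<Rightarrow> 'y"              \<comment> \<open>y (i-1) = y_i\<close>
    and nu :: "'y measure" and T :: "'y \<Rightarrow> real^'p" and \<Theta> :: "(real^'p) set"
    and \<Theta>M :: "'m::countable \<Rightarrow> (real^'p) set"
    and S :: "nat \<Rightarrow> real^'p \<Rightarrow> 'm"
    and M :: 'm
    and \<theta>0 :: "real^'p"
    and est :: "nat \<Rightarrow> (nat \<Rightarrow> 'y) \<Rightarrow> real^'p"
    and C :: real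
  defines "Tbar \<equiv> (\<lambda>n \<omega>. (1 / real n) *\<^sub>R (\<Sum>i<n. T (y i \<omega>)))"
  defines "Pn \<equiv> (\<lambda>n. prob_space.prob P {\<omega>\<in>space P. S n (Tbar n \<omega>) = M})"
  assumes P: "prob_space P"
    and F: "prob_space F" "sets F = sets Y"
    and y_rv: "\<And>i. y i \<in> measurable P Y"
    and y_indep: "prob_space.indep_vars P (\<lambda>_. Y) y UNIV"
    and y_dist: "\<And>i. distr P Y (y i) = F"
    and expfam: "sets nu = sets Y" "regular_expfam nu T \<Theta>"
    and submodels: "\<And>M'. \<Theta>M M' \<subseteq> \<Theta>"
    and S_meas: "\<And>n. S n \<in> borel \<rightarrow>\<^sub>M count_space UNIV"
    and target: "\<theta>0 \<in> \<Theta>M M"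
      "\<forall>\<theta>\<in>\<Theta>M M. integrable F (loglik nu T \<theta>)"
      "\<forall>\<theta>\<in>\<Theta>M M. (\<integral>u. loglik nu T \<theta> u \<partial>F) \<le> (\<integral>u. loglik nu T \<theta>0 u \<partial>F)"
    and rate_pos: "eventually (\<lambda>n. Pn n > 0) sequentially"
    and rate: "\<And>\<delta>. \<delta> > 0 \<Longrightarrow> (\<lambda>n. exp (- \<delta> * real n) / Pn n) \<longlonglongrightarrow> 0"
    and est_fun: "\<And>n x x'. (\<forall>i<n. x i = x' i) \<Longrightarrow> est n x = est n x'"
    and est_rv: "\<And>n. (\<lambda>\<omega>. est n (\<lambda>i. y i \<omega>)) \<in> borel_measurable P"
    and unbiased: "\<And>n j. n \<ge> 1 \<Longrightarrow> integrable P (\<lambda>\<omega>. est n (\<lambda>i. y i \<omega>) $ j)"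
      "\<And>n j. n \<ge> 1 \<Longrightarrow> (\<integral>\<omega>. est n (\<lambda>i. y i \<omega>) $ j \<partial>P) = \<theta>0 $ j"
    and C: "0 < C"
    and subg: "\<And>n j. n \<ge> 1 \<Longrightarrow>
       subgaussian P (\<lambda>\<omega>. sqrt (real n) * (est n (\<lambda>i. y i \<omega>) $ j - \<theta>0 $ j)) C"
  shows "\<forall>\<epsilon>>0. (\<lambda>n. cond_prob P (\<lambda>\<omega>. linf_norm (est n (\<lambda>i. y i \<omega>) - \<theta>0) > \<epsilon>)
                                  (\<lambda>\<omega>. S n (Tbar n \<omega>) = M)) \<longlonglongrightarrow> 0"
proof (intro allI impI)
  fix \<epsilon> :: real assume e: "\<epsilon> > 0"
  interpret P: prob_space P by (rule P)
  define \<delta> where "\<delta> = \<epsilon>\<^sup>2 / (2 * C\<^sup>2)"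
  have d: "\<delta> > 0" using e C by (simp add: \<delta>_def)
  define K where "K = 2 * real CARD('p)"
  define cp where "cp = (\<lambda>n. cond_prob P (\<lambda>\<omega>. linf_norm (est n (\<lambda>i. y i \<omega>) - \<theta>0) > \<epsilon>)
                                  (\<lambda>\<omega>. S n (Tbar n \<omega>) = M))"
  have bound: "0 \<le> cp n \<and> cp n \<le> K * (exp (- \<delta> * real n) / Pn n)" if n1: "n \<ge> 1" and pos: "Pn n > 0" for n
  proof -
    define X where "X = (\<lambda>j \<omega>. sqrt (real n) * (est n (\<lambda>i. y i \<omega>) $ j - \<theta>0 $ j))"
    have estm: "(\<lambda>\<omega>. est n (\<lambda>i. y i \<omega>)) \<in> borel_measurable P" by (rule est_rv)
    have Xm: "X j \<in> borel_measurable P" for j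
      unfolding X_def using vec_nth_meas[OF estm, of j] by measurable
    define E where "E = (\<lambda>j. {\<omega>\<in>space P. \<bar>X j \<omega>\<bar> \<ge> sqrt (real n) * \<epsilon>})"
    have Em: "E j \<in> sets P" for j unfolding E_def using Xm[of j] by measurable
    define A where "A = {\<omega>\<in>space P. linf_norm (est n (\<lambda>i. y i \<omega>) - \<theta>0) > \<epsilon>}"
    have sqp: "sqrt (real n) > 0" using n1 by simp
    have AE: "A \<subseteq> (\<Union>j\<in>UNIV. E j)"
    proof
      fix \<omega> assume "\<omega> \<in> A"
      then obtain j where j: "\<bar>(est n (\<lambda>i. y i \<omega>) - \<theta>0) $ j\<bar> > \<epsilon>" and sp: "\<omega> \<in> space P"
        unfolding A_def using linf_gt by blast
      have "sqrt (real n) * \<epsilon> \<le> sqrt (real n) * \<bar>est n (\<lambda>i. y i \<omega>) $ j - \<theta>0 $ j\<bar>"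
        using j sqp by (intro mult_left_mono) auto
      then have "\<omega> \<in> E j" unfolding E_def X_def using sp sqp by (simp add: abs_mult)
      then show "\<omega> \<in> (\<Union>j\<in>UNIV. E j)" by blast
    qed
    have Am: "A \<in> sets P"
    proof -
      have "(\<lambda>\<omega>. linf_norm (est n (\<lambda>i. y i \<omega>) - \<theta>0)) \<in> borel_measurable P"
      proof -
        have "(\<lambda>\<omega>. est n (\<lambda>i. y i \<omega>) - \<theta>0) \<in> borel_measurable P" using estm by measurable
        from vec_nth_meas[OF this] show ?thesis unfolding linf_norm_def by measurable
      qed
      then show ?thesis unfolding A_def by measurable
    qed
    have "P.prob A \<le> P.prob (\<Union>j\<in>UNIV. E j)"
      using AE Em by (intro P.finite_measure_mono) auto
    also have "\<dots> \<le> (\<Sum>j\<in>UNIV. P.prob (E j))"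
      using Em by (intro measure_UNION_le) auto
    also have "\<dots> \<le> (\<Sum>j\<in>(UNIV::'p set). 2 * exp (- (sqrt (real n) * \<epsilon>)\<^sup>2 / (2 * C\<^sup>2)))"
    proof (intro sum_mono)
      fix j :: 'p
      have sg: "subgaussian P (X j) C" unfolding X_def using subg[OF n1] .
      have "sqrt (real n) * \<epsilon> > 0" using sqp e by simp
      then show "P.prob (E j) \<le> 2 * exp (- (sqrt (real n) * \<epsilon>)\<^sup>2 / (2 * C\<^sup>2))"
        unfolding E_def using P.subg_tail2[OF sg C _ Xm] by blast
    qed
    also have "\<dots> = K * exp (- \<delta> * real n)"
      unfolding K_def \<delta>_def by (simp add: power_mult_distrib algebra_simps)
    finally have PA: "P.prob A \<le> K * exp (- \<delta> * real n)" .
    have cpe: "cp n = measure P {\<omega>\<in>space P. linf_norm (est n (\<lambda>i. y i \<omega>) - \<theta>0) > \<epsilon> \<and> S n (Tbar n \<omega>) = M} / Pn n"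
      unfolding cp_def cond_prob_def Pn_def by simp
    have "measure P {\<omega>\<in>space P. linf_norm (est n (\<lambda>i. y i \<omega>) - \<theta>0) > \<epsilon> \<and> S n (Tbar n \<omega>) = M} \<le> P.prob A"
      using Am unfolding A_def by (intro P.finite_measure_mono) auto
    then have "cp n \<le> K * exp (- \<delta> * real n) / Pn n"
      unfolding cpe using PA pos by (intro divide_right_mono) auto
    moreover have "0 \<le> cp n" unfolding cpe using pos by simp
    ultimately show ?thesis by simp
  qed
  have ev: "eventually (\<lambda>n. 0 \<le> cp n \<and> cp n \<le> K * (exp (- \<delta> * real n) / Pn n)) sequentially"
    using rate_pos eventually_ge_at_top[of 1]
    by eventually_elim (use bound in blast)
  have lim: "(\<lambda>n. K * (exp (- \<delta> * real n) / Pn n)) \<longlonglongrightarrow> 0"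
    using tendsto_mult[OF tendsto_const[of K] rate[OF d]] by simp
  have "cp \<longlonglongrightarrow> 0"
    by (rule tendsto_sandwich[OF _ _ tendsto_const lim]) (use ev in \<open>auto elim: eventually_mono\<close>)
  then show "(\<lambda>n. cond_prob P (\<lambda>\<omega>. linf_norm (est n (\<lambda>i. y i \<omega>) - \<theta>0) > \<epsilon>)
                                  (\<lambda>\<omega>. S n (Tbar n \<omega>) = M)) \<longlonglongrightarrow> 0" unfolding cp_def .
qed

end
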